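(* Let $a,b,c,d$ be nonnegative integers and let $\kappa,\lambda\subseteq\Box_{a+c,b+d}$ be partitions with $\ell(\kappa)\le a$ and $\lambda_1\le b$. Work in the cohomology ring of $G(a+c,b+d)$. (1) If $|\kappa|+|\lambda|>ad+ab+cb$, then $\sigma_\kappa\cdot\sigma_\lambda=0$. (2) If $|\kappa|+|\lambda|=ad+ab+cb$ and $\sigma_\kappa\cdot\sigma_\lambda\neq0$, then $\sigma_\kappa\cdot\sigma_\lambda=\sigma_{\Box_{c,d}^\vee}$, where $\Box_{c,d}^\vee$ is the complement of $\Box_{c,d}$ in $\Box_{a+c,b+d}$ (the partition with $a$ parts equal to $b+d$ followed by $c$ parts equal to $b$), and there is a partition $\alpha\subseteq\Box_{a,b}$ such that $\kappa=\Box_{a,d}+\alpha$ and $\lambda=(\Box_{c,b},\alpha^\vee)$, where $\alpha^\vee$ is the complement of $\alpha$ in $\Box_{a,b}$.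
   Context: Partitions: weakly decreasing finite sequences of positive integers $\lambda_1\ge\dots\ge\lambda_k>0$, with $\lambda_i:=0$ for $i>k$, $\ell(\lambda)=k$, $|\lambda|=\sum\lambda_i$; $\lambda\subseteq\mu$ means $\lambda_i\le\mu_i$ for all $i$. $\Box_{a,b}$ is the partition with $a$ parts equal to $b$. $\mu+\nu$ has $k$-th part $\mu_k+\nu_k$; $(\mu,\nu)$ is the decreasing rearrangement of the concatenated parts of $\mu$ and $\nu$. For $\lambda\subseteq\Box_{a,b}$, its complement in $\Box_{a,b}$ is the partition $\lambda^\vee\subseteq\Box_{a,b}$ with $\lambda^\vee_i=b-\lambda_{a+1-i}$ for $i=1,\dots,a$. $G(a,b)$ is the Grassmannian of $a$-dimensional subspaces of $\mathbb{C}^{a+b}$. Its cohomology ring has $\mathbb{Z}$-basis the Schubert classes $\sigma_\lambda$, $\lambda\subseteq\Box_{a,b}$ (the class of the Schubert variety $\Omega_\lambda F_\bullet=\{H: \dim H\cap F_{b+i-\lambda_i}\ge i,\ i=1,\dots,a\}$ for a complete flag $F_\bullet$); the map from symmetric functions sending the Schur function $S_\lambda$ to $\sigma_\lambda$ if $\lambda\subseteq\Box_{a,b}$ and to $0$ otherwise is a surjective ring homomorphism, so products of Schubert classes are computed by Littlewood-Richardson coefficients, discarding partitions not contained in $\Box_{a,b}$. $\sigma_{\Box_{a,b}}$ is the class of a point. *)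

theory Defs
  imports Main
begin

text \<open>Partitions are represented as lists of positive naturals in weakly decreasing order.
  Parts are indexed from 0 here: part lam i is the (i+1)-st part, 0 beyond the length.\<close>

definition is_partition :: "nat list \<Rightarrow> bool" where
  "is_partition lam \<longleftrightarrow> sorted_wrt (\<ge>) lam \<and> (\<forall>x\<in>set lam. 0 < x)"

definition part :: "nat list \<Rightarrow> nat \<Rightarrow> nat" where
  "part lam i = (if i < length lam then lam ! i else 0)"

definition subpart :: "nat list \<Rightarrow> nat list \<Rightarrow> bool" where
  "subpart lam mu \<longleftrightarrow> (\<forall>i. part lam i \<le> part mu i)"

definition psize :: "nat list \<Rightarrow> nat" where
  "psize lam = sum_list lam"

definition box :: "nat \<Rightarrow> nat \<Rightarrow> nat list" where
  "box a b = filter (\<lambda>x. 0 < x) (replicate a b)"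

definition pcompl :: "nat \<Rightarrow> nat \<Rightarrow> nat list \<Rightarrow> nat list" where
  "pcompl a b lam = filter (\<lambda>x. 0 < x) (map (\<lambda>i. b - part lam (a - 1 - i)) [0..<a])"

definition padd :: "nat list \<Rightarrow> nat list \<Rightarrow> nat list" where
  "padd mu nu = map (\<lambda>i. part mu i + part nu i) [0..<max (length mu) (length nu)]"

definition pconcat :: "nat list \<Rightarrow> nat list \<Rightarrow> nat list" where
  "pconcat mu nu = rev (sort (mu @ nu))"

text \<open>Cells (row, column), 0-indexed, of the skew shape nu/kappa.\<close>
definition skew_cells :: "nat list \<Rightarrow> nat list \<Rightarrow> (nat \<times> nat) set" where
  "skew_cells nu kappa = {(i, j). part kappa i \<le> j \<and> j < part nu i}"

text \<open>Reading order: rows top to bottom, each row right to left.\<close>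
definition read_le :: "nat \<times> nat \<Rightarrow> nat \<times> nat \<Rightarrow> bool" where
  "read_le p q \<longleftrightarrow> fst p < fst q \<or> (fst p = fst q \<and> snd q \<le> snd p)"

text \<open>Littlewood-Richardson tableaux of shape nu/kappa and content lam: semistandard
  fillings (entries \<ge> 1, rows weakly increasing, columns strictly increasing) with
  lam_k entries equal to k, whose reverse reading word is a lattice word.\<close>
definition LR_tableaux :: "nat list \<Rightarrow> nat list \<Rightarrow> nat list \<Rightarrow> ((nat \<times> nat) \<Rightarrow> nat) set" where
  "LR_tableaux nu kappa lam = {T.
     (\<forall>p. p \<notin> skew_cells nu kappa \<longrightarrow> T p = 0) \<and>
     (\<forall>p\<in>skew_cells nu kappa. 1 \<le> T p) \<and>
     (\<forall>i j. (i, j) \<in> skew_cells nu kappa \<and> (i, Suc j) \<in> skew_cells nu kappa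
            \<longrightarrow> T (i, j) \<le> T (i, Suc j)) \<and>
     (\<forall>i j. (i, j) \<in> skew_cells nu kappa \<and> (Suc i, j) \<in> skew_cells nu kappa
            \<longrightarrow> T (i, j) < T (Suc i, j)) \<and>
     (\<forall>k\<ge>1. card {p \<in> skew_cells nu kappa. T p = k} = part lam (k - 1)) \<and>
     (\<forall>q\<in>skew_cells nu kappa. \<forall>k\<ge>1.
        card {p \<in> skew_cells nu kappa. read_le p q \<and> T p = Suc k}
          \<le> card {p \<in> skew_cells nu kappa. read_le p q \<and> T p = k})}"

definition LR_coeff :: "nat list \<Rightarrow> nat list \<Rightarrow> nat list \<Rightarrow> nat" where
  "LR_coeff kappa lam nu =
     (if is_partition kappa \<and> is_partition lam \<and> is_partition nu \<and> subpart kappa nu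
      then card (LR_tableaux nu kappa lam) else 0)"

text \<open>Product sigma_kappa * sigma_lam in H^*(G(n,m)), given by its coordinates in the
  Schubert basis sigma_nu (nu \<subseteq> Box n m); the coordinate function is 0 off that basis.\<close>
definition schub_prod :: "nat \<Rightarrow> nat \<Rightarrow> nat list \<Rightarrow> nat list \<Rightarrow> nat list \<Rightarrow> nat" where
  "schub_prod n m kappa lam nu =
     (if is_partition nu \<and> subpart nu (box n m) then LR_coeff kappa lam nu else 0)"

text \<open>The Schubert class sigma_mu, as coordinate function in the Schubert basis.\<close>
definition schub_class :: "nat list \<Rightarrow> nat list \<Rightarrow> nat" where
  "schub_class mu nu = (if nu = mu then 1 else 0)"

end

theory Submission
  imports Defs "HOL-Library.Multiset"
begin


lemma part_anti:
  assumes "is_partition l" "i \<le> i'" shows "part l i' \<le> part l i"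
proof -
  have s: "sorted_wrt (\<ge>) l" using assms(1) by (simp add: is_partition_def)
  show ?thesis
  proof (cases "i' < length l")
    case True
    then show ?thesis using assms(2) s
      by (cases "i = i'") (auto simp: Defs.part_def intro: sorted_wrt_nth_less[OF s])
  qed (simp add: Defs.part_def)
qed

lemma part_pos: "is_partition l \<Longrightarrow> i < length l \<Longrightarrow> 0 < part l i"
  by (auto simp: is_partition_def Defs.part_def)

lemma part_ge_len: "length l \<le> i \<Longrightarrow> part l i = 0"
  by (simp add: Defs.part_def)

lemma part_eq_list:
  assumes "is_partition x" "is_partition y" "\<And>i. part x i = part y i"
  shows "x = y"
proof -
  have len: "length x = length y"
  proof (rule ccontr)
    assume "length x \<noteq> length y"
    then consider "length x < length y" | "length y < length x" by linarith
    then show False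
    proof cases
      case 1
      then have "0 < part y (length x)" using part_pos[OF assms(2)] by blast
      then show False using assms(3)[of "length x"] by (simp add: Defs.part_def)
    next
      case 2
      then have "0 < part x (length y)" using part_pos[OF assms(1)] by blast
      then show False using assms(3)[of "length y"] by (simp add: Defs.part_def)
    qed
  qed
  show ?thesis
  proof (rule nth_equalityI[OF len])
    fix i assume "i < length x"
    then show "x ! i = y ! i" using assms(3)[of i] len by (simp add: Defs.part_def)
  qed
qed

lemma part_map_upt: "part (map f [0..<M]) i = (if i < M then f i else 0)"
  by (simp add: Defs.part_def)

lemma part_padd: "part (padd x y) i = part x i + part y i"
  by (auto simp: padd_def Defs.part_def)

lemma part_filter_pos:
  assumes "sorted_wrt (\<ge>) (xs::nat list)"
  shows "part (filter (\<lambda>x. 0 < x) xs) i = part xs i"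
proof -
  have f: "filter (\<lambda>x. 0 < x) xs = takeWhile (\<lambda>x. 0 < x) xs"
    using assms
  proof (induction xs)
    case (Cons x xs)
    show ?case
    proof (cases "0 < x")
      case False
      then have "x = 0" by simp
      then have "\<forall>y\<in>set xs. y = 0" using Cons.prems by auto
      then show ?thesis using False by (simp add: filter_False)
    qed (use Cons in auto)
  qed simp
  let ?t = "takeWhile (\<lambda>x. 0 < x) xs"
  show ?thesis
  proof (cases "i < length ?t")
    case True
    then show ?thesis unfolding f Defs.part_def using takeWhile_nth[OF True]
      by (simp add: less_le_trans[OF True length_takeWhile_le])
  next
    case False
    show ?thesis
    proof (cases "i < length xs")
      case True
      have lt: "length ?t < length xs" using False True by linarith
      have "\<not> 0 < xs ! length ?t" using nth_length_takeWhile[OF lt] .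
      moreover have "xs ! i \<le> xs ! length ?t"
        using False True assms by (cases "length ?t = i") (auto intro: sorted_wrt_nth_less)
      ultimately show ?thesis using False True unfolding f Defs.part_def by simp
    qed (use False in \<open>auto simp: f Defs.part_def\<close>)
  qed
qed

lemma is_partition_filter:
  "sorted_wrt (\<ge>) (xs::nat list) \<Longrightarrow> is_partition (filter (\<lambda>x. 0 < x) xs)"
  by (simp add: is_partition_def sorted_wrt_filter)

lemma sorted_map_upt_anti:
  assumes "\<And>i i'. i \<le> i' \<Longrightarrow> i' < M \<Longrightarrow> f i' \<le> (f i::nat)"
  shows "sorted_wrt (\<ge>) (map f [0..<M])"
  using assms by (auto simp: sorted_wrt_iff_nth_less)

lemma part_box: "part (box n m) i = (if i < n then m else 0)"
  by (cases "m = 0") (auto simp: box_def Defs.part_def filter_True)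

lemma box_partition: "is_partition (box n m)"
  unfolding box_def is_partition_def
  by (cases "m = 0") (auto simp: filter_True sorted_wrt_iff_nth_less)

lemma pconcat_sorted:
  assumes "sorted_wrt (\<ge>) (zs::nat list)" shows "rev (sort zs) = zs"
proof -
  have "sort zs = rev zs"
    by (rule properties_for_sort) (use assms in \<open>simp_all add: sorted_wrt_rev\<close>)
  then show ?thesis by simp
qed

lemma sum_list_part:
  assumes "length l \<le> L" shows "sum_list l = (\<Sum>i<L. part l i)"
proof -
  have "sum_list l = (\<Sum>i<length l. part l i)"
    by (simp add: sum_list_sum_nth Defs.part_def atLeast0LessThan)
  also have "\<dots> = (\<Sum>i<L. part l i)"
    by (rule sum.mono_neutral_left) (use assms in \<open>auto simp: Defs.part_def\<close>)
  finally show ?thesis .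
qed



locale lrt =
  fixes nu kappa lam :: "nat list" and T :: "nat \<times> nat \<Rightarrow> nat"
  assumes pn: "is_partition nu" and pk: "is_partition kappa" and pl: "is_partition lam"
    and sub: "subpart kappa nu" and TT: "T \<in> LR_tableaux nu kappa lam"
begin

abbreviation S where "S \<equiv> skew_cells nu kappa"

definition cnt where "cnt i k = card {p\<in>S. fst p = i \<and> T p = k}"
definition B where "B i k = card {p\<in>S. fst p < i \<and> T p = k}"
definition ge where "ge i k = card {p\<in>S. fst p = i \<and> k \<le> T p}"

lemma mem_S: "(i,j) \<in> S \<longleftrightarrow> part kappa i \<le> j \<and> j < part nu i"
  by (simp add: skew_cells_def)

lemma K_le_N: "part kappa i \<le> part nu i"
  using sub by (simp add: subpart_def)

lemma finS: "finite S"
proof (rule finite_subset)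
  show "S \<subseteq> {..<length nu} \<times> {..<part nu 0}"
  proof
    fix p assume p: "p \<in> S"
    obtain i j where ij: "p = (i,j)" by fastforce
    have "j < part nu i" using p ij mem_S by auto
    moreover have "part nu i \<le> part nu 0" using part_anti[OF pn] by simp
    moreover have "i < length nu" using \<open>j < part nu i\<close> by (cases "i < length nu") (auto simp: Defs.part_def)
    ultimately show "p \<in> {..<length nu} \<times> {..<part nu 0}" using ij by auto
  qed
qed simp

lemma finite_subS: "finite {p\<in>S. P p}"
  using finS by simp

lemma Tout: "p \<notin> S \<Longrightarrow> T p = 0"
  using TT unfolding LR_tableaux_def by (cases p) auto
lemma Tpos: "p \<in> S \<Longrightarrow> 1 \<le> T p"
  using TT by (simp add: LR_tableaux_def)
lemma Trow: "(i,j) \<in> S \<Longrightarrow> (i,Suc j) \<in> S \<Longrightarrow> T (i,j) \<le> T (i, Suc j)"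
  using TT unfolding LR_tableaux_def by blast
lemma Tcol: "(i,j) \<in> S \<Longrightarrow> (Suc i,j) \<in> S \<Longrightarrow> T (i,j) < T (Suc i, j)"
  using TT unfolding LR_tableaux_def by blast
lemma Tcont: "1 \<le> k \<Longrightarrow> card {p\<in>S. T p = k} = part lam (k - 1)"
  using TT unfolding LR_tableaux_def by blast
lemma Tlat: "q \<in> S \<Longrightarrow> 1 \<le> k \<Longrightarrow>
   card {p\<in>S. read_le p q \<and> T p = Suc k} \<le> card {p\<in>S. read_le p q \<and> T p = k}"
  using TT unfolding LR_tableaux_def by blast

lemma row_mono:
  assumes "(i,j) \<in> S" "(i,j') \<in> S" "j \<le> j'"
  shows "T (i,j) \<le> T (i,j')"
  using assms(3,2)
proof (induction j' rule: dec_induct)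
  case base then show ?case by simp
next
  case (step n)
  have "(i,n) \<in> S" using assms(1) step.prems step.hyps mem_S by auto
  then show ?case using step Trow by (meson le_trans)
qed

lemma col_mono:
  assumes "(i,j) \<in> S" "(i',j) \<in> S" "i \<le> i'"
  shows "T (i,j) + (i' - i) \<le> T (i',j)"
  using assms(3,2)
proof (induction i' rule: dec_induct)
  case base then show ?case by simp
next
  case (step n)
  have "part kappa n \<le> part kappa i" using part_anti[OF pk step.hyps(1)] .
  moreover have "part nu (Suc n) \<le> part nu n" using part_anti[OF pn] by simp
  ultimately have "(n,j) \<in> S" using assms(1) step.prems mem_S by auto
  then have "T (i,j) + (n - i) \<le> T (n,j)" using step by blast
  moreover have "T (n,j) < T (Suc n, j)" using Tcol \<open>(n,j) \<in> S\<close> step.prems by blast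
  ultimately show ?case using step.hyps by linarith
qed

lemma Tbound: "p \<in> S \<Longrightarrow> T p \<le> length lam"
proof (rule ccontr)
  assume p: "p \<in> S" and "\<not> T p \<le> length lam"
  then have "card {q\<in>S. T q = T p} = part lam (T p - 1)" using Tcont by simp
  also have "\<dots> = 0" using \<open>\<not> T p \<le> length lam\<close> by (intro part_ge_len) simp
  finally have "{q\<in>S. T q = T p} = {}" using finite_subS by simp
  then show False using p by blast
qed

lemma len_k_le_nu: "length kappa \<le> length nu"
proof (rule ccontr)
  assume "\<not> ?thesis"
  then have "0 < part kappa (length nu)" using part_pos[OF pk] by simp
  then show False using K_le_N[of "length nu"] by (simp add: Defs.part_def)
qed

lemma card_S_nu: "card S + psize kappa = psize nu"
proof -
  let ?L = "length nu"
  have S_eq: "S = Sigma {..<?L} (\<lambda>i. {part kappa i..<part nu i})"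
  proof (rule set_eqI)
    fix p :: "nat \<times> nat"
    obtain i j where ij: "p = (i,j)" by fastforce
    have "j < part nu i \<Longrightarrow> i < ?L" by (cases "i < ?L") (auto simp: Defs.part_def)
    then show "p \<in> S \<longleftrightarrow> p \<in> Sigma {..<?L} (\<lambda>i. {part kappa i..<part nu i})"
      using ij mem_S by auto
  qed
  have "card S = (\<Sum>i<?L. part nu i - part kappa i)"
    unfolding S_eq by (subst card_SigmaI) auto
  moreover have "psize kappa = (\<Sum>i<?L. part kappa i)"
    unfolding psize_def by (rule sum_list_part[OF len_k_le_nu])
  moreover have "psize nu = (\<Sum>i<?L. part nu i)"
    unfolding psize_def by (rule sum_list_part) simp
  moreover have "(\<Sum>i<?L. part nu i - part kappa i) + (\<Sum>i<?L. part kappa i) = (\<Sum>i<?L. part nu i)"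
    by (subst sum.distrib[symmetric]) (simp add: K_le_N)
  ultimately show ?thesis by simp
qed

lemma card_upto: "card {p\<in>S. 1 \<le> T p \<and> T p \<le> k} = (\<Sum>v<k. part lam v)"
proof (induction k)
  case 0
  have "{p\<in>S. 1 \<le> T p \<and> T p \<le> 0} = {}" by auto
  then show ?case by (metis card.empty sum.empty lessThan_0)
next
  case (Suc k)
  have "{p\<in>S. 1 \<le> T p \<and> T p \<le> Suc k} = {p\<in>S. 1 \<le> T p \<and> T p \<le> k} \<union> {p\<in>S. T p = Suc k}"
    by auto
  then have "card {p\<in>S. 1 \<le> T p \<and> T p \<le> Suc k} = card {p\<in>S. 1 \<le> T p \<and> T p \<le> k} + card {p\<in>S. T p = Suc k}"
    by (simp add: card_Un_disjoint finite_subS disjoint_iff)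
  then show ?case using Suc Tcont[of "Suc k"] by simp
qed

lemma card_S_lam: "card S = psize lam"
proof -
  have "S = {p\<in>S. 1 \<le> T p \<and> T p \<le> length lam}" using Tpos Tbound by auto
  then have "card S = (\<Sum>v<length lam. part lam v)" using card_upto by metis
  then show ?thesis unfolding psize_def using sum_list_part[of lam "length lam"] by simp
qed

lemma psize_eq: "psize nu = psize kappa + psize lam"
  using card_S_nu card_S_lam by simp

lemma B_Suc: "B (Suc i) k = B i k + cnt i k"
proof -
  have "{p\<in>S. fst p < Suc i \<and> T p = k} = {p\<in>S. fst p < i \<and> T p = k} \<union> {p\<in>S. fst p = i \<and> T p = k}"
    by auto
  then show ?thesis unfolding B_def cnt_def
    by (simp add: card_Un_disjoint finite_subS disjoint_iff)
qed

lemma B_0: "B 0 k = 0"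
  by (simp add: B_def)

lemma ge_split: "ge i k = cnt i k + ge i (Suc k)"
proof -
  have "{p\<in>S. fst p = i \<and> k \<le> T p} = {p\<in>S. fst p = i \<and> T p = k} \<union> {p\<in>S. fst p = i \<and> Suc k \<le> T p}"
    by auto
  then show ?thesis unfolding ge_def cnt_def
    by (simp add: card_Un_disjoint finite_subS disjoint_iff)
qed

lemma ge_big: "length lam < k \<Longrightarrow> ge i k = 0"
proof -
  assume k: "length lam < k"
  have "{p\<in>S. fst p = i \<and> k \<le> T p} = {}" using Tbound k by fastforce
  then show ?thesis unfolding ge_def by (metis card.empty)
qed

lemma PL1:
  assumes k: "1 \<le> k" and c: "0 < cnt i (Suc k)"
  shows "cnt i (Suc k) + B i (Suc k) \<le> B i k"
proof -
  let ?J = "{j. (i,j) \<in> S \<and> T (i,j) = Suc k}"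
  have "{p\<in>S. fst p = i \<and> T p = Suc k} \<noteq> {}" using c unfolding cnt_def by (metis card.empty less_irrefl)
  then have Jne: "?J \<noteq> {}" by auto
  have Jfin: "finite ?J"
    by (rule finite_subset[of _ "{..<part nu i}"]) (auto simp: mem_S)
  define j0 where "j0 = Min ?J"
  have j0J: "j0 \<in> ?J" unfolding j0_def using Jne Jfin Min_in by blast
  have j0min: "\<And>j. j \<in> ?J \<Longrightarrow> j0 \<le> j" unfolding j0_def using Jfin by simp
  let ?q = "(i,j0)"
  have qS: "?q \<in> S" using j0J by simp
  have L: "{p\<in>S. read_le p ?q \<and> T p = Suc k} = {p\<in>S. fst p < i \<and> T p = Suc k} \<union> {p\<in>S. fst p = i \<and> T p = Suc k}"
  proof (rule set_eqI)
    fix p :: "nat \<times> nat"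
    obtain i' j' where ij: "p = (i',j')" by fastforce
    show "p \<in> {p\<in>S. read_le p ?q \<and> T p = Suc k} \<longleftrightarrow>
          p \<in> {p\<in>S. fst p < i \<and> T p = Suc k} \<union> {p\<in>S. fst p = i \<and> T p = Suc k}"
      using j0min[of j'] ij by (auto simp: read_le_def)
  qed
  have R: "{p\<in>S. read_le p ?q \<and> T p = k} = {p\<in>S. fst p < i \<and> T p = k}"
  proof (rule set_eqI)
    fix p :: "nat \<times> nat"
    obtain i' j' where ij: "p = (i',j')" by fastforce
    have "p \<in> S \<Longrightarrow> i' = i \<Longrightarrow> j0 \<le> j' \<Longrightarrow> T p \<noteq> k"
      using row_mono[OF qS, of j'] ij j0J by fastforce
    then show "p \<in> {p\<in>S. read_le p ?q \<and> T p = k} \<longleftrightarrow> p \<in> {p\<in>S. fst p < i \<and> T p = k}"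
      using ij by (auto simp: read_le_def)
  qed
  have "card {p\<in>S. read_le p ?q \<and> T p = Suc k} = B i (Suc k) + cnt i (Suc k)"
    unfolding L B_def cnt_def by (simp add: card_Un_disjoint finite_subS disjoint_iff)
  moreover have "card {p\<in>S. read_le p ?q \<and> T p = k} = B i k"
    unfolding R B_def ..
  ultimately show ?thesis using Tlat[OF qS k] by simp
qed

lemma G: "1 \<le> k \<Longrightarrow> B i (Suc k) \<le> B i k"
proof (induction i)
  case 0 then show ?case by (simp add: B_0)
next
  case (Suc i)
  show ?case
  proof (cases "cnt i (Suc k) = 0")
    case True
    then show ?thesis using Suc B_Suc[of i] by (simp add: trans_le_add1)
  next
    case False
    then show ?thesis using PL1[OF Suc.prems, of i] B_Suc[of i] by simp
  qed
qed

lemma PL: "1 \<le> k \<Longrightarrow> cnt i (Suc k) + B i (Suc k) \<le> B i k"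
  using PL1 G by (cases "cnt i (Suc k) = 0") auto

lemma KL_aux: "\<forall>K. 1 \<le> K \<longrightarrow> length lam \<le> K + M \<longrightarrow> ge i (Suc K) \<le> B i K"
proof (induction M)
  case 0 then show ?case using ge_big by simp
next
  case (Suc M)
  show ?case
  proof (intro allI impI)
    fix K assume K: "1 \<le> K" "length lam \<le> K + Suc M"
    have "ge i (Suc (Suc K)) \<le> B i (Suc K)" using Suc.IH K by simp
    then show "ge i (Suc K) \<le> B i K" using ge_split[of i "Suc K"] PL[OF K(1), of i] by simp
  qed
qed

lemma KL: "1 \<le> K \<Longrightarrow> ge i (Suc K) \<le> B i K"
  using KL_aux[of "length lam"] by simp

lemma row_set: "{p\<in>S. fst p = i} = (\<lambda>j. (i,j)) ` {part kappa i..<part nu i}"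
  by (auto simp: mem_S)

lemma row_card: "card {p\<in>S. fst p = i} = part nu i - part kappa i"
  unfolding row_set by (subst card_image) (auto simp: inj_on_def)

lemma ge1: "ge i 1 = part nu i - part kappa i"
proof -
  have "{p\<in>S. fst p = i \<and> 1 \<le> T p} = {p\<in>S. fst p = i}" using Tpos by auto
  then show ?thesis unfolding ge_def row_card[symmetric] by simp
qed

lemma B1_le: "B i 1 \<le> part lam 0"
proof -
  have "B i 1 \<le> card {p\<in>S. T p = 1}" unfolding B_def by (rule card_mono) (auto simp: finite_subS)
  then show ?thesis using Tcont[of 1] by simp
qed

lemma row_len: "part nu i - part kappa i \<le> part lam 0"
proof -
  have "ge i 1 = cnt i 1 + ge i 2" using ge_split[of i 1] by (simp add: numeral_2_eq_2)
  also have "\<dots> \<le> cnt i 1 + B i 1" using KL[of 1 i] by (simp add: numeral_2_eq_2)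
  also have "\<dots> = B (Suc i) 1" using B_Suc by simp
  also have "\<dots> \<le> part lam 0" by (rule B1_le)
  finally show ?thesis using ge1 by simp
qed

lemma tight_aux: "1 \<le> K \<Longrightarrow> ge i 1 + B i K \<le> cnt i 1 + B i 1 + ge i (Suc K)"
proof (induction K rule: dec_induct)
  case base then show ?case using ge_split[of i 1] by simp
next
  case (step n)
  then show ?case using ge_split[of i "Suc n"] PL[OF step.hyps(1), of i] by simp
qed

lemma tight:
  assumes "part lam 0 \<le> part nu i - part kappa i" "1 \<le> K"
  shows "ge i (Suc K) = B i K" and "B (Suc i) 1 = part lam 0"
proof -
  have a: "cnt i 1 + B i 1 \<le> part lam 0" using B1_le[of "Suc i"] B_Suc by simp
  show "ge i (Suc K) = B i K" using tight_aux[OF assms(2), of i] a assms(1) ge1 KL[OF assms(2), of i] by simp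
  show "B (Suc i) 1 = part lam 0" using B1_le[of "Suc i"] B_Suc[of i 1] row_len[of i] assms(1) ge1[of i]
    ge_split[of i 1] KL[of 1 i] by (simp add: numeral_2_eq_2)
qed

end



locale lrt2 = lrt +
  fixes a b c d :: nat
  assumes nuA: "\<And>i. i < a \<Longrightarrow> part nu i = b + d"
    and nuB: "\<And>i. a \<le> i \<Longrightarrow> i < a + c \<Longrightarrow> part nu i = b"
    and nuC: "\<And>i. a + c \<le> i \<Longrightarrow> part nu i = 0"
    and kA: "\<And>i. i < a \<Longrightarrow> d \<le> part kappa i"
    and kB: "\<And>i. a \<le> i \<Longrightarrow> part kappa i = 0"
    and lb: "part lam 0 \<le> b"
begin

definition lo where "lo j = (LEAST s. part kappa s \<le> j)"

lemma lo_iff: "part kappa s \<le> j \<longleftrightarrow> lo j \<le> s"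
proof -
  have ex: "part kappa (length kappa) \<le> j" by (simp add: Defs.part_def)
  have l: "part kappa (lo j) \<le> j" unfolding lo_def by (rule LeastI[where P="\<lambda>s. part kappa s \<le> j", OF ex])
  show ?thesis
  proof
    assume "part kappa s \<le> j" then show "lo j \<le> s" unfolding lo_def by (rule Least_le)
  next
    assume "lo j \<le> s" then show "part kappa s \<le> j" using part_anti[OF pk] l le_trans by blast
  qed
qed

lemma topS: "i < a \<Longrightarrow> (i,j) \<in> S \<longleftrightarrow> lo j \<le> i \<and> j < b + d"
  using mem_S lo_iff nuA by auto

lemma top_lower: "i < a \<Longrightarrow> (i,j) \<in> S \<Longrightarrow> i - lo j + 1 \<le> T (i,j)"
proof -
  assume i: "i < a" and ij: "(i,j) \<in> S"
  then have l: "lo j \<le> i" "j < b + d" using topS by auto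
  then have "(lo j, j) \<in> S" using topS i by simp
  then have "T (lo j, j) + (i - lo j) \<le> T (i,j)" using col_mono ij l by blast
  moreover have "1 \<le> T (lo j, j)" using Tpos \<open>(lo j, j) \<in> S\<close> by blast
  ultimately show ?thesis by simp
qed

lemma B_top_gen:
  assumes IH: "\<And>i' j'. i' < i \<Longrightarrow> (i',j') \<in> S \<Longrightarrow> T (i',j') = i' - lo j' + 1"
    and i: "i \<le> a" and v: "1 \<le> v"
  shows "B i v = card {j'. j' < b + d \<and> lo j' + v \<le> i}"
proof -
  let ?J = "{j'. j' < b + d \<and> lo j' + v \<le> i}"
  have "{p\<in>S. fst p < i \<and> T p = v} = (\<lambda>j'. (lo j' + v - 1, j')) ` ?J"
  proof (rule set_eqI)
    fix p :: "nat \<times> nat"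
    obtain i' j' where ij: "p = (i',j')" by fastforce
    show "p \<in> {p\<in>S. fst p < i \<and> T p = v} \<longleftrightarrow> p \<in> (\<lambda>j'. (lo j' + v - 1, j')) ` ?J"
    proof
      assume "p \<in> {p\<in>S. fst p < i \<and> T p = v}"
      then have p: "(i',j') \<in> S" "i' < i" "T (i',j') = v" using ij by auto
      have ia: "i' < a" using p(2) i by simp
      have "T (i',j') = i' - lo j' + 1" using IH p by blast
      moreover have "lo j' \<le> i'" "j' < b + d" using topS[OF ia] p(1) by auto
      ultimately show "p \<in> (\<lambda>j'. (lo j' + v - 1, j')) ` ?J" using p ij by force
    next
      assume "p \<in> (\<lambda>j'. (lo j' + v - 1, j')) ` ?J"
      then have p: "i' = lo j' + v - 1" "j' < b + d" "lo j' + v \<le> i" using ij by auto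
      have ii: "i' < i" using p v by simp
      have ia: "i' < a" using ii i by simp
      have S: "(i',j') \<in> S" using topS[OF ia] p v by simp
      have "T (i',j') = v" using IH[OF ii S] p v by simp
      then show "p \<in> {p\<in>S. fst p < i \<and> T p = v}" using S ii ij by simp
    qed
  qed
  moreover have "inj_on (\<lambda>j'. (lo j' + v - 1, j')) ?J" by (auto simp: inj_on_def)
  ultimately show ?thesis unfolding B_def by (simp add: card_image)
qed

lemma top: "i < a \<Longrightarrow> (i,j) \<in> S \<Longrightarrow> T (i,j) = i - lo j + 1"
proof (induction i arbitrary: j rule: less_induct)
  case (less i)
  note lower = top_lower[OF less.prems]
  show ?case
  proof (rule ccontr)
    assume "T (i,j) \<noteq> i - lo j + 1"
    define v where "v = i - lo j + 1"
    have v1: "1 \<le> v" unfolding v_def by simp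
    have Tj: "Suc v \<le> T (i,j)" using lower \<open>T (i,j) \<noteq> i - lo j + 1\<close> unfolding v_def by simp
    let ?X = "{p\<in>S. fst p = i \<and> Suc v \<le> T p}"
    let ?J = "{j'. j' < b + d \<and> lo j' + v \<le> i}"
    let ?Y = "(\<lambda>j'. (i,j')) ` ?J"
    have lj: "lo j \<le> i" using topS less.prems by auto
    have YX: "?Y \<subseteq> ?X"
    proof
      fix p assume "p \<in> ?Y"
      then obtain j' where j': "p = (i,j')" "j' < b + d" "lo j' + v \<le> i" by auto
      have S: "(i,j') \<in> S" using topS[OF less.prems(1)] j' by simp
      have "i - lo j' + 1 \<le> T (i,j')" using top_lower[OF less.prems(1) S] .
      then show "p \<in> ?X" using S j' by auto
    qed
    have "(i,j) \<in> ?X" using less.prems Tj by simp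
    moreover have "(i,j) \<notin> ?Y" using lj unfolding v_def by auto
    ultimately have "?Y \<subset> ?X" using YX by blast
    then have "card ?Y < card ?X" by (rule psubset_card_mono[OF finite_subS])
    moreover have "card ?Y = card ?J" by (rule card_image) (auto simp: inj_on_def)
    moreover have "B i v = card ?J"
      by (rule B_top_gen[OF _ _ v1]) (use less in auto)
    moreover have "card ?X \<le> B i v" using KL[OF v1, of i] unfolding ge_def .
    ultimately show False by simp
  qed
qed

lemma B_a: "1 \<le> k \<Longrightarrow> B a k = (if k \<le> a then b + d - part kappa (a - k) else 0)"
proof -
  assume k: "1 \<le> k"
  have "B a k = card {j'. j' < b + d \<and> lo j' + k \<le> a}"
    by (rule B_top_gen[OF top _ k]) auto
  also have "\<dots> = (if k \<le> a then b + d - part kappa (a - k) else 0)"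
  proof (cases "k \<le> a")
    case True
    have "{j'. j' < b + d \<and> lo j' + k \<le> a} = {part kappa (a - k)..<b + d}"
      using lo_iff[of "a - k"] True by auto
    then show ?thesis using True by simp
  next
    case False
    then have "{j'. j' < b + d \<and> lo j' + k \<le> a} = {}" by auto
    then show ?thesis using False by simp
  qed
  finally show ?thesis .
qed

lemma bottom_rowlen: "a \<le> i \<Longrightarrow> i < a + c \<Longrightarrow> part nu i - part kappa i = b"
  using nuB kB by simp

lemma B_rec1: "a \<le> i \<Longrightarrow> i < a + c \<Longrightarrow> B (Suc i) 1 = b"
proof -
  assume i: "a \<le> i" "i < a + c"
  have "B (Suc i) 1 = part lam 0" using tight(2)[of i 1] bottom_rowlen[OF i] lb by simp
  moreover have "b \<le> B (Suc i) 1" using B_Suc[of i 1] ge_split[of i 1] KL[of 1 i] ge1[of i] bottom_rowlen[OF i]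
    by (simp add: numeral_2_eq_2)
  ultimately show ?thesis using lb by simp
qed

lemma B_rec2: "a \<le> i \<Longrightarrow> i < a + c \<Longrightarrow> 1 \<le> k \<Longrightarrow> B (Suc i) (Suc k) = B i k"
proof -
  assume i: "a \<le> i" "i < a + c" and k: "1 \<le> k"
  have h: "part lam 0 \<le> part nu i - part kappa i" using bottom_rowlen[OF i] lb by simp
  have "ge i (Suc k) = B i k" using tight(1)[OF h k] .
  moreover have "ge i (Suc (Suc k)) = B i (Suc k)" using tight(1)[OF h, of "Suc k"] by simp
  moreover have "ge i (Suc k) = cnt i (Suc k) + ge i (Suc (Suc k))" by (rule ge_split)
  moreover have "B (Suc i) (Suc k) = B i (Suc k) + cnt i (Suc k)" by (rule B_Suc)
  ultimately show ?thesis by simp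
qed

lemma B_closed: "s \<le> c \<Longrightarrow> 1 \<le> k \<Longrightarrow> B (a + s) k = (if k \<le> s then b else B a (k - s))"
proof (induction s arbitrary: k)
  case 0 then show ?case by simp
next
  case (Suc s)
  show ?case
  proof (cases k)
    case 0 then show ?thesis using Suc by simp
  next
    case (Suc k')
    show ?thesis
    proof (cases k')
      case 0
      then show ?thesis using B_rec1[of "a + s"] Suc.prems \<open>k = Suc k'\<close> by simp
    next
      case (Suc k'')
      have "B (a + Suc s) k = B (a + s) k'" using B_rec2[of "a + s" k'] Suc.prems \<open>k = Suc k'\<close> Suc by simp
      also have "\<dots> = (if k' \<le> s then b else B a (k' - s))" using Suc.IH[of k'] Suc.prems Suc by simp
      finally show ?thesis using \<open>k = Suc k'\<close> by simp
    qed
  qed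
qed

lemma content: "part lam m = (if m < c then b else if m < a + c then b + d - part kappa (a + c - 1 - m) else 0)"
proof -
  have "part lam m = card {p\<in>S. T p = Suc m}" using Tcont[of "Suc m"] by simp
  also have "\<dots> = B (a + c) (Suc m)"
  proof -
    have "\<And>p. p \<in> S \<Longrightarrow> fst p < a + c"
    proof -
      fix p assume "p \<in> S"
      moreover obtain i j where "p = (i,j)" by fastforce
      ultimately show "fst p < a + c" using mem_S nuC[of i] by (cases "a + c \<le> i") auto
    qed
    then have "{p\<in>S. T p = Suc m} = {p\<in>S. fst p < a + c \<and> T p = Suc m}" by auto
    then show ?thesis unfolding B_def by simp
  qed
  also have "\<dots> = (if Suc m \<le> c then b else B a (Suc m - c))" using B_closed[of c "Suc m"] by simp
  also have "\<dots> = (if m < c then b else if m < a + c then b + d - part kappa (a + c - 1 - m) else 0)"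
  proof (cases "m < c")
    case False
    then have "1 \<le> Suc m - c" by simp
    then show ?thesis using B_a[of "Suc m - c"] False
      by (simp add: Suc_diff_le not_less)
  qed simp
  finally show ?thesis .
qed

end



lemma row_det:
  fixes T1 T2 :: "nat \<times> nat \<Rightarrow> nat" and S :: "(nat \<times> nat) set"
  assumes fin: "finite S"
    and cont: "\<And>j'. (i,j') \<in> S \<longleftrightarrow> L \<le> j' \<and> j' < U"
    and m1: "\<And>j j'. (i,j) \<in> S \<Longrightarrow> (i,j') \<in> S \<Longrightarrow> j \<le> j' \<Longrightarrow> T1 (i,j) \<le> T1 (i,j')"
    and m2: "\<And>j j'. (i,j) \<in> S \<Longrightarrow> (i,j') \<in> S \<Longrightarrow> j \<le> j' \<Longrightarrow> T2 (i,j) \<le> T2 (i,j')"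
    and eq: "\<And>v. card {p\<in>S. fst p = i \<and> v \<le> T1 p} = card {p\<in>S. fst p = i \<and> v \<le> T2 p}"
    and ij: "(i,j) \<in> S"
  shows "T2 (i,j) \<le> T1 (i,j)"
proof (rule ccontr)
  assume nt: "\<not> T2 (i,j) \<le> T1 (i,j)"
  define v where "v = T2 (i,j)"
  have lt: "T1 (i,j) < v" using nt v_def by simp
  let ?A = "{p\<in>S. fst p = i \<and> v \<le> T1 p}"
  let ?C = "{p\<in>S. fst p = i \<and> v \<le> T2 p}"
  have jU: "L \<le> j" "j < U" using cont ij by auto
  have A: "?A \<subseteq> (\<lambda>j'. (i,j')) ` {Suc j..<U}"
  proof
    fix p assume p: "p \<in> ?A"
    obtain i' j' where pp: "p = (i',j')" by fastforce
    have S: "(i,j') \<in> S" "v \<le> T1 (i,j')" using p pp by auto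
    have "j < j'"
    proof (rule ccontr)
      assume "\<not> j < j'"
      then have "T1 (i,j') \<le> T1 (i,j)" using m1[OF S(1) ij] by simp
      then show False using lt S(2) by simp
    qed
    moreover have "i' = i" using p pp by simp
    moreover have "j' < U" using cont[of j'] S(1) by simp
    ultimately show "p \<in> (\<lambda>j'. (i,j')) ` {Suc j..<U}" using pp by auto
  qed
  have C: "(\<lambda>j'. (i,j')) ` {j..<U} \<subseteq> ?C"
  proof
    fix p assume "p \<in> (\<lambda>j'. (i,j')) ` {j..<U}"
    then obtain j' where j': "p = (i,j')" "j \<le> j'" "j' < U" by auto
    have S: "(i,j') \<in> S" using cont jU j' by auto
    have "v \<le> T2 (i,j')" using m2[OF ij S j'(2)] v_def by simp
    then show "p \<in> ?C" using S j' by simp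
  qed
  have "card ?A \<le> card ((\<lambda>j'. (i,j')) ` {Suc j..<U})" by (rule card_mono[OF _ A]) auto
  also have "\<dots> = U - Suc j" by (subst card_image) (auto simp: inj_on_def)
  also have "\<dots> < U - j" using jU by simp
  also have "U - j = card ((\<lambda>j'. (i,j')) ` {j..<U})" by (subst card_image) (auto simp: inj_on_def)
  also have "\<dots> \<le> card ?C" by (rule card_mono) (use fin C in auto)
  finally show False using eq[of v] by simp
qed

lemma lrt2_unique:
  assumes X: "lrt2 nu kappa lam T a b c d" and Y: "lrt2 nu kappa lam T' a b c d"
  shows "T = T'"
proof -
  interpret X: lrt2 nu kappa lam T a b c d by (rule X)
  interpret Y: lrt2 nu kappa lam T' a b c d by (rule Y)
  have "\<forall>j. T (i,j) = T' (i,j)" for i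
  proof (induction i rule: less_induct)
    case (less i)
    show ?case
    proof
      fix j
      show "T (i,j) = T' (i,j)"
      proof (cases "(i,j) \<in> X.S")
        case False
        then show ?thesis using X.Tout Y.Tout by simp
      next
        case ij: True
        show ?thesis
        proof (cases "i < a")
          case True
          then show ?thesis using X.top Y.top ij by simp
        next
          case False
          have ic: "i < a + c" using ij X.mem_S X.nuC[of i] by (cases "a + c \<le> i") auto
          have Beq: "X.B i v = Y.B i v" for v
          proof -
            have "{p\<in>X.S. fst p < i \<and> T p = v} = {p\<in>X.S. fst p < i \<and> T' p = v}"
              using less by (auto simp: prod_eq_iff)
            then show ?thesis unfolding X.B_def Y.B_def by simp
          qed
          have h: "part lam 0 \<le> part nu i - part kappa i" using X.bottom_rowlen[of i] False ic X.lb by simp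
          have geq: "X.ge i v = Y.ge i v" for v
          proof (cases v)
            case 0
            then show ?thesis unfolding X.ge_def Y.ge_def by simp
          next
            case (Suc v')
            show ?thesis
            proof (cases v')
              case 0 then show ?thesis using X.ge1 Y.ge1 Suc by simp
            next
              case (Suc v'')
              then show ?thesis using X.tight(1)[OF h, of v'] Y.tight(1)[OF h, of v'] Beq \<open>v = Suc v'\<close> by simp
            qed
          qed
          have rd: "\<And>T1 T2. lrt nu kappa lam T1 \<Longrightarrow> lrt nu kappa lam T2 \<Longrightarrow>
              (\<And>v. lrt.ge nu kappa T1 i v = lrt.ge nu kappa T2 i v) \<Longrightarrow> T2 (i,j) \<le> T1 (i,j)"
          proof -
            fix T1 T2 assume l1: "lrt nu kappa lam T1" and l2: "lrt nu kappa lam T2"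
              and e: "\<And>v. lrt.ge nu kappa T1 i v = lrt.ge nu kappa T2 i v"
            show "T2 (i,j) \<le> T1 (i,j)"
              by (rule row_det[where S = X.S and L = "part kappa i" and U = "part nu i"])
                 (use X.finS X.mem_S lrt.row_mono[OF l1] lrt.row_mono[OF l2] e ij
                    in \<open>auto simp: lrt.ge_def[OF l1] lrt.ge_def[OF l2]\<close>)
          qed
          have "T' (i,j) \<le> T (i,j)" using rd[OF X.lrt_axioms Y.lrt_axioms] geq by blast
          moreover have "T (i,j) \<le> T' (i,j)" using rd[OF Y.lrt_axioms X.lrt_axioms] geq by metis
          ultimately show ?thesis by simp
        qed
      qed
    qed
  qed
  then show ?thesis by (auto simp: fun_eq_iff)
qed



lemma nz_facts:
  assumes pk: "is_partition kappa" and pl: "is_partition lam"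
    and nz: "schub_prod n m kappa lam nu \<noteq> 0"
  shows "is_partition nu" "subpart nu (box n m)" "\<exists>T. lrt nu kappa lam T"
    "schub_prod n m kappa lam nu = card (LR_tableaux nu kappa lam)"
proof -
  show pn: "is_partition nu" and sb: "subpart nu (box n m)"
    using nz by (auto simp: schub_prod_def split: if_splits)
  have sk: "subpart kappa nu" using nz by (auto simp: schub_prod_def LR_coeff_def split: if_splits)
  show e: "schub_prod n m kappa lam nu = card (LR_tableaux nu kappa lam)"
    using pn sb sk pk pl by (simp add: schub_prod_def LR_coeff_def)
  then have "LR_tableaux nu kappa lam \<noteq> {}" using nz by auto
  then obtain T where "T \<in> LR_tableaux nu kappa lam" by blast
  then show "\<exists>T. lrt nu kappa lam T" using pn pk pl sk by (auto intro!: lrt.intro)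
qed

lemma sum_bound: "(\<Sum>i<a+c. (if i < a then b + d else b::nat)) = a * (b + d) + c * b"
  by (induction c) auto

lemma main_facts:
  fixes a b c d :: nat
  assumes pk: "is_partition kappa" and pl: "is_partition lam"
    and lk: "length kappa \<le> a" and lb: "part lam 0 \<le> b"
    and nz: "schub_prod (a + c) (b + d) kappa lam nu \<noteq> 0"
  shows "psize nu = psize kappa + psize lam" "psize nu \<le> a * d + a * b + c * b"
    "psize nu = a * d + a * b + c * b \<Longrightarrow>
       (\<forall>i. part nu i = (if i < a then b + d else if i < a + c then b else 0)) \<and>
       (\<forall>T. T \<in> LR_tableaux nu kappa lam \<longrightarrow> lrt2 nu kappa lam T a b c d)"
proof -
  note F = nz_facts[OF pk pl nz]
  obtain T0 where T0: "lrt nu kappa lam T0" using F(3) by blast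
  interpret L: lrt nu kappa lam T0 by (rule T0)
  show ps: "psize nu = psize kappa + psize lam" by (rule L.psize_eq)
  define bd where "bd i = (if i < a then b + d else if i < a + c then b else 0)" for i
  have pbox: "part nu i \<le> (if i < a + c then b + d else 0)" for i
    using F(2) by (simp add: subpart_def part_box)
  have kz: "a \<le> i \<Longrightarrow> part kappa i = 0" for i using lk by (simp add: part_ge_len)
  have le: "part nu i \<le> bd i" for i
  proof -
    have "a \<le> i \<Longrightarrow> part nu i \<le> b" using L.row_len[of i] kz[of i] lb by simp
    then show ?thesis using pbox[of i] unfolding bd_def by (auto split: if_splits)
  qed
  have lnu: "length nu \<le> a + c"
  proof (rule ccontr)
    assume "\<not> ?thesis"
    then have "0 < part nu (a + c)" using part_pos[OF F(1)] by simp
    then show False using pbox[of "a + c"] by simp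
  qed
  have pss: "psize nu = (\<Sum>i<a+c. part nu i)" unfolding psize_def by (rule sum_list_part[OF lnu])
  have sb: "(\<Sum>i<a+c. bd i) = a * d + a * b + c * b"
  proof -
    have "(\<Sum>i<a+c. bd i) = (\<Sum>i<a+c. (if i < a then b + d else b::nat))"
      by (rule sum.cong) (auto simp: bd_def)
    then show ?thesis using sum_bound[where a=a and b=b and c=c and d=d] by (simp add: algebra_simps)
  qed
  show "psize nu \<le> a * d + a * b + c * b"
    unfolding pss sb[symmetric] by (rule sum_mono) (rule le)
  assume eq: "psize nu = a * d + a * b + c * b"
  have eqi: "\<forall>i. part nu i = bd i"
  proof
    fix i
    show "part nu i = bd i"
    proof (cases "i < a + c")
      case True
      show ?thesis
      proof (rule ccontr)
        assume "part nu i \<noteq> bd i"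
        then have "part nu i < bd i" using le[of i] by simp
        then have "(\<Sum>i<a+c. part nu i) < (\<Sum>i<a+c. bd i)"
          using True by (intro sum_strict_mono_ex1) (auto intro: le)
        then show False using eq pss sb by simp
      qed
    next
      case False
      then show ?thesis using le[of i] by (simp add: bd_def)
    qed
  qed
  then show "(\<forall>i. part nu i = (if i < a then b + d else if i < a + c then b else 0)) \<and>
       (\<forall>T. T \<in> LR_tableaux nu kappa lam \<longrightarrow> lrt2 nu kappa lam T a b c d)"
  proof (intro conjI allI impI)
    fix i show "part nu i = (if i < a then b + d else if i < a + c then b else 0)"
      using eqi bd_def by simp
  next
    fix T assume T: "T \<in> LR_tableaux nu kappa lam"
    have lT: "lrt nu kappa lam T" using T F(1) pk pl L.sub by (auto intro!: lrt.intro)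
    show "lrt2 nu kappa lam T a b c d"
    proof (rule lrt2.intro[OF lT], unfold_locales)
      fix i
      show "i < a \<Longrightarrow> part nu i = b + d" using eqi bd_def by simp
      show "a \<le> i \<Longrightarrow> i < a + c \<Longrightarrow> part nu i = b" using eqi bd_def by simp
      show "a + c \<le> i \<Longrightarrow> part nu i = 0" using eqi bd_def by simp
      show "i < a \<Longrightarrow> d \<le> part kappa i" using eqi bd_def L.row_len[of i] lb by simp
      show "a \<le> i \<Longrightarrow> part kappa i = 0" by (rule kz)
    qed (rule lb)
  qed
qed



lemma padd_partition:
  assumes "is_partition x" "is_partition y" shows "is_partition (padd x y)"
proof -
  have s: "sorted_wrt (\<ge>) (padd x y)" unfolding padd_def
    by (rule sorted_map_upt_anti) (use part_anti[OF assms(1)] part_anti[OF assms(2)] in \<open>simp add: add_mono\<close>)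
  have "\<forall>v\<in>set (padd x y). 0 < v"
  proof
    fix v assume "v \<in> set (padd x y)"
    then obtain i where i: "i < max (length x) (length y)" "v = part x i + part y i"
      unfolding padd_def by auto
    then show "0 < v" using part_pos[OF assms(1), of i] part_pos[OF assms(2), of i] by (auto simp: max_def split: if_splits)
  qed
  then show ?thesis using s by (simp add: is_partition_def)
qed

theorem lemma2p3:
  fixes a b c d :: nat and kappa lam :: "nat list"
  assumes "is_partition kappa" and "is_partition lam"
    and "subpart kappa (box (a + c) (b + d))" and "subpart lam (box (a + c) (b + d))"
    and "length kappa \<le> a" and "part lam 0 \<le> b"
  shows "(psize kappa + psize lam > a * d + a * b + c * b \<longrightarrow>
            schub_prod (a + c) (b + d) kappa lam = (\<lambda>_. 0))
       \<and> (psize kappa + psize lam = a * d + a * b + c * b \<and>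
            schub_prod (a + c) (b + d) kappa lam \<noteq> (\<lambda>_. 0) \<longrightarrow>
            schub_prod (a + c) (b + d) kappa lam
              = schub_class (pcompl (a + c) (b + d) (box c d))
            \<and> (\<exists>alpha. is_partition alpha \<and> subpart alpha (box a b) \<and>
                 kappa = padd (box a d) alpha \<and>
                 lam = pconcat (box c b) (pcompl a b alpha)))"
proof (intro conjI impI)
  note MF = main_facts[OF assms(1,2,5,6)]
  assume gt: "psize kappa + psize lam > a * d + a * b + c * b"
  show "schub_prod (a + c) (b + d) kappa lam = (\<lambda>_. 0)"
  proof
    fix nu show "schub_prod (a + c) (b + d) kappa lam nu = 0"
      using MF(1,2)[of c d nu] gt by (cases "schub_prod (a + c) (b + d) kappa lam nu = 0") auto
  qed
next
  note MF = main_facts[OF assms(1,2,5,6)]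
  assume H: "psize kappa + psize lam = a * d + a * b + c * b \<and> schub_prod (a + c) (b + d) kappa lam \<noteq> (\<lambda>_. 0)"
  then obtain nu where nz: "schub_prod (a + c) (b + d) kappa lam nu \<noteq> 0" by (auto simp: fun_eq_iff)
  define nu0 where "nu0 = pcompl (a + c) (b + d) (box c d)"
  define f0 where "f0 i = (if i < a then b + d else if i < a + c then b else 0)" for i
  have mapeq: "map (\<lambda>i. b + d - part (box c d) (a + c - 1 - i)) [0..<a+c] = map f0 [0..<a+c]"
    by (auto simp: part_box f0_def)
  have s0: "sorted_wrt (\<ge>) (map f0 [0..<a+c])"
    by (rule sorted_map_upt_anti) (auto simp: f0_def)
  have nu0_part: "part nu0 i = f0 i" for i
    unfolding nu0_def pcompl_def mapeq part_filter_pos[OF s0] part_map_upt by (simp add: f0_def)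
  have nu0_p: "is_partition nu0"
    unfolding nu0_def pcompl_def mapeq by (rule is_partition_filter[OF s0])
  have uniq_nu: "\<And>nu'. schub_prod (a + c) (b + d) kappa lam nu' \<noteq> 0 \<Longrightarrow> nu' = nu0"
  proof -
    fix nu' assume nz': "schub_prod (a + c) (b + d) kappa lam nu' \<noteq> 0"
    have "psize nu' = a * d + a * b + c * b" using MF(1)[OF nz'] H by simp
    then have "\<forall>i. part nu' i = f0 i" using MF(3)[OF nz'] f0_def by simp
    then show "nu' = nu0" using part_eq_list[OF nz_facts(1)[OF assms(1,2) nz'] nu0_p] nu0_part by simp
  qed
  have nunu0: "nu = nu0" by (rule uniq_nu[OF nz])
  have pe: "psize nu = a * d + a * b + c * b" using MF(1)[OF nz] H by simp
  note MF3 = MF(3)[OF nz pe]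
  obtain T0 where lT0: "lrt nu kappa lam T0" using nz_facts(3)[OF assms(1,2) nz] by blast
  have T0in: "T0 \<in> LR_tableaux nu kappa lam" using lrt.TT[OF lT0] .
  have l2: "lrt2 nu kappa lam T0 a b c d" using MF3 T0in by blast
  have LRset: "LR_tableaux nu kappa lam = {T0}"
    using T0in MF3 lrt2_unique[OF l2] by blast
  show "schub_prod (a + c) (b + d) kappa lam = schub_class (pcompl (a + c) (b + d) (box c d))"
  proof
    fix nu'
    show "schub_prod (a + c) (b + d) kappa lam nu' = schub_class (pcompl (a + c) (b + d) (box c d)) nu'"
    proof (cases "nu' = nu0")
      case True
      then show ?thesis using nz_facts(4)[OF assms(1,2) nz] LRset nunu0
        by (simp add: schub_class_def nu0_def)
    next
      case False
      then show ?thesis using uniq_nu[of nu'] by (auto simp: schub_class_def nu0_def)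
    qed
  qed
  interpret L: lrt2 nu kappa lam T0 a b c d by (rule l2)
  define g where "g i = part kappa i - d" for i
  define alpha where "alpha = filter (\<lambda>x. 0 < x) (map g [0..<a])"
  have sg: "sorted_wrt (\<ge>) (map g [0..<a])"
    by (rule sorted_map_upt_anti) (use part_anti[OF assms(1)] in \<open>simp add: g_def diff_le_mono\<close>)
  have alpha_part: "part alpha i = (if i < a then part kappa i - d else 0)" for i
    unfolding alpha_def part_filter_pos[OF sg] part_map_upt g_def by simp
  have alpha_p: "is_partition alpha" unfolding alpha_def by (rule is_partition_filter[OF sg])
  have Kle: "i < a \<Longrightarrow> part kappa i \<le> b + d" for i using L.K_le_N[of i] L.nuA[of i] by simp
  show "\<exists>alpha. is_partition alpha \<and> subpart alpha (box a b) \<and>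
                 kappa = padd (box a d) alpha \<and>
                 lam = pconcat (box c b) (pcompl a b alpha)"
  proof (intro exI conjI)
    show "is_partition alpha" by (rule alpha_p)
    show "subpart alpha (box a b)"
      unfolding subpart_def alpha_part part_box
    proof
      fix i show "(if i < a then part kappa i - d else 0) \<le> (if i < a then b else 0)"
      proof (cases "i < a")
        case True
        have "part kappa i \<le> b + d" using Kle True by blast
        then have "part kappa i - d \<le> b" by linarith
        then show ?thesis using True by simp
      qed simp
    qed
    show "kappa = padd (box a d) alpha"
    proof (rule part_eq_list[OF assms(1) padd_partition[OF box_partition alpha_p]])
      fix i show "part kappa i = part (padd (box a d) alpha) i"
        using L.kA[of i] L.kB[of i] by (auto simp: part_padd part_box alpha_part)
    qed
    define h where "h i = b - part alpha (a - 1 - i)" for i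
    have sh: "sorted_wrt (\<ge>) (map h [0..<a])"
      by (rule sorted_map_upt_anti) (use part_anti[OF alpha_p] in \<open>simp add: h_def diff_le_mono2\<close>)
    have pc: "pcompl a b alpha = filter (\<lambda>x. 0 < x) (map h [0..<a])"
      unfolding pcompl_def h_def ..
    show "lam = pconcat (box c b) (pcompl a b alpha)"
    proof (cases "b = 0")
      case True
      have "lam = []" using assms(6) True part_pos[OF assms(2), of 0] by (cases lam) auto
      moreover have "box c b = []" using True by (simp add: box_def)
      moreover have "pcompl a b alpha = []" using True by (simp add: pcompl_def)
      ultimately show ?thesis by (simp add: pconcat_def)
    next
      case False
      have bx: "box c b = replicate c b" using False by (simp add: box_def filter_True)
      let ?z = "box c b @ pcompl a b alpha"
      have hb: "\<forall>y\<in>set (pcompl a b alpha). y \<le> b" unfolding pc h_def by auto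
      have sz: "sorted_wrt (\<ge>) ?z"
        unfolding sorted_wrt_append using bx hb sorted_wrt_filter[OF sh] pc
        by (auto simp: sorted_wrt_iff_nth_less)
      have zp: "is_partition ?z" using sz False bx unfolding is_partition_def pc by auto
      have pz: "part ?z m = (if m < c then b else if m < a + c then b - part alpha (a + c - 1 - m) else 0)" for m
      proof (cases "m < c")
        case True then show ?thesis by (simp add: Defs.part_def bx nth_append)
      next
        case False
        have "part ?z m = part (pcompl a b alpha) (m - c)"
          using False by (auto simp: Defs.part_def bx nth_append)
        also have "\<dots> = (if m - c < a then h (m - c) else 0)"
          unfolding pc part_filter_pos[OF sh] part_map_upt ..
        finally show ?thesis using False by (auto simp: h_def)
      qed
      have "lam = ?z"
      proof (rule part_eq_list[OF assms(2) zp])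
        fix m
        show "part lam m = part ?z m"
        proof (cases "c \<le> m \<and> m < a + c")
          case True
          then have i: "a + c - 1 - m < a" by linarith
          then show ?thesis unfolding pz L.content using L.kA[OF i] Kle[OF i]
            by (auto simp: alpha_part)
        qed (auto simp: pz L.content)
      qed
      then show ?thesis unfolding pconcat_def pconcat_sorted[OF sz] .
    qed
  qed
qed


end
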